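(* Let $[t_0,t_1]$ be an admissible segment of $\mathbf r$. For $t\in(t_0,t_1]$ let $\mathbf r_0\,\mathbf r_1(t)\,\mathbf r_2(t)\,\mathbf r_3(t)$ be the associated tetrahedron of the sub-segment $[t_0,t]$. Then the edge lengths $\|\mathbf r_0\mathbf r_1(t)\|$, $\|\mathbf r_1(t)\mathbf r_2(t)\|$, $\|\mathbf r_2(t)\mathbf r_3(t)\|$ all tend to $0$ as $t\to t_0^+$ (equivalently, as the arc length of $\mathbf r|_{[t_0,t]}$ tends to $0$).
   Context: Setting: $\mathbf r(t)=(x(t),y(t),z(t))$ with $x,y,z$ rational functions with real coefficients whose denominators do not vanish on the parameter interval, properly parametrized, and not contained in a plane. Curvature $\kappa=\|\mathbf r'\times\mathbf r''\|/\|\mathbf r'\|^3$; torsion $\tau$ vanishes exactly where $\det(\mathbf r',\mathbf r'',\mathbf r''')=0$. Unit tangent $\boldsymbol\alpha=\mathbf r'/\|\mathbf r'\|$, unit binormal $\boldsymbol\gamma=\mathbf r'\times\mathbf r''/\|\mathbf r'\times\mathbf r''\|$; one-sided limits $\boldsymbol\alpha^{\pm}(s)=\lim_{t\to s^\pm}\boldsymbol\alpha(t)$, $\boldsymbol\gamma^{\pm}(s)=\lim_{t\to s^\pm}\boldsymbol\gamma(t)$; tangent lines $T^{\pm}(s)=\{\mathbf r(s)+\lambda\boldsymbol\alpha^{\pm}(s)\}$, osculating planes $O^{\pm}(s)=\{X:(X-\mathbf r(s))\cdot\boldsymbol\gamma^{\pm}(s)=0\}$. A point is singular if it corresponds to more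 than one parameter counted with multiplicity; character points are singular points, inflections ($\kappa=0$) and torsion-vanishing points ($\tau=0$). Associated tetrahedron of $[a,b]$: vertices $\mathbf r(a)$, $T^+(a)\cap L$, $T^-(b)\cap L$, $\mathbf r(b)$ where $L=O^+(a)\cap O^-(b)$. Admissible segment: $t_0<t_1$, no parameter in $(t_0,t_1]$ gives a character point, and for all $t_0\le s_1<s_2\le t_1$: (I) $\boldsymbol\alpha^+(s_1)\cdot\boldsymbol\gamma^-(s_2)\ne0$ and $\boldsymbol\alpha^-(s_2)\cdot\boldsymbol\gamma^+(s_1)\ne0$; (II) $(\boldsymbol\alpha^+(s_1)\times(\mathbf r(s_2)-\mathbf r(s_1)))\cdot\boldsymbol\alpha^-(s_2)\ne0$; (III) $(\mathbf r(s_1)-\mathbf r(s_2))\cdot\boldsymbol\gamma^-(s_2)\ne0$ and $(\mathbf r(s_2)-\mathbf r(s_1))\cdot\boldsymbol\gamma^+(s_1)\ne0$; and (IV) for all $t_0\le s_1<s_2<s_3\le t_1$, $\det(\boldsymbol\alpha(s_1),\boldsymbol\alpha(s_2),\boldsymbol\alpha(s_3))\ne0$ (one-sided limits used at $t_0,t_1$). *)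

theory Defs
  imports "HOL-Analysis.Analysis" "HOL-Computational_Algebra.Polynomial"
begin

definition rcurve :: "(3 \<Rightarrow> real poly) \<Rightarrow> (3 \<Rightarrow> real poly) \<Rightarrow> real \<Rightarrow> real^3" where
  "rcurve P Q t = (\<chi> i. poly (P i) t / poly (Q i) t)"

definition rcurveC :: "(3 \<Rightarrow> real poly) \<Rightarrow> (3 \<Rightarrow> real poly) \<Rightarrow> complex \<Rightarrow> complex^3" where
  "rcurveC P Q z = (\<chi> i. poly (map_poly complex_of_real (P i)) z / poly (map_poly complex_of_real (Q i)) z)"

definition denoms_nonzeroC :: "(3 \<Rightarrow> real poly) \<Rightarrow> complex \<Rightarrow> bool" where
  "denoms_nonzeroC Q z \<longleftrightarrow> (\<forall>i. poly (map_poly complex_of_real (Q i)) z \<noteq> 0)"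

text \<open>Proper parametrization: generically injective (over the complex parameter line).\<close>

definition proper_param :: "(3 \<Rightarrow> real poly) \<Rightarrow> (3 \<Rightarrow> real poly) \<Rightarrow> bool" where
  "proper_param P Q \<longleftrightarrow>
     finite {z. denoms_nonzeroC Q z \<and>
               (\<exists>w. w \<noteq> z \<and> denoms_nonzeroC Q w \<and> rcurveC P Q w = rcurveC P Q z)}"

definition admissible_curve :: "(3 \<Rightarrow> real poly) \<Rightarrow> (3 \<Rightarrow> real poly) \<Rightarrow> real set \<Rightarrow> bool" where
  "admissible_curve P Q I \<longleftrightarrow>
     is_interval I \<and>
     (\<forall>t\<in>I. \<forall>i. poly (Q i) t \<noteq> 0) \<and>
     proper_param P Q \<and>
     \<not> (\<exists>n c. n \<noteq> 0 \<and> (\<forall>t\<in>I. n \<bullet> rcurve P Q t = c))"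

definition d1 :: "(real \<Rightarrow> real^3) \<Rightarrow> real \<Rightarrow> real^3" where
  "d1 r t = vector_derivative r (at t)"

definition d2 :: "(real \<Rightarrow> real^3) \<Rightarrow> real \<Rightarrow> real^3" where
  "d2 r t = vector_derivative (d1 r) (at t)"

definition d3 :: "(real \<Rightarrow> real^3) \<Rightarrow> real \<Rightarrow> real^3" where
  "d3 r t = vector_derivative (d2 r) (at t)"

definition utangent :: "(real \<Rightarrow> real^3) \<Rightarrow> real \<Rightarrow> real^3" where
  "utangent r t = d1 r t /\<^sub>R norm (d1 r t)"

definition ubinormal :: "(real \<Rightarrow> real^3) \<Rightarrow> real \<Rightarrow> real^3" where
  "ubinormal r t = cross3 (d1 r t) (d2 r t) /\<^sub>R norm (cross3 (d1 r t) (d2 r t))"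

definition alpha_plus :: "(real \<Rightarrow> real^3) \<Rightarrow> real \<Rightarrow> real^3" where
  "alpha_plus r s = Lim (at_right s) (utangent r)"

definition alpha_minus :: "(real \<Rightarrow> real^3) \<Rightarrow> real \<Rightarrow> real^3" where
  "alpha_minus r s = Lim (at_left s) (utangent r)"

definition gamma_plus :: "(real \<Rightarrow> real^3) \<Rightarrow> real \<Rightarrow> real^3" where
  "gamma_plus r s = Lim (at_right s) (ubinormal r)"

definition gamma_minus :: "(real \<Rightarrow> real^3) \<Rightarrow> real \<Rightarrow> real^3" where
  "gamma_minus r s = Lim (at_left s) (ubinormal r)"

definition tangent_plus :: "(real \<Rightarrow> real^3) \<Rightarrow> real \<Rightarrow> (real^3) set" where
  "tangent_plus r s = {r s + l *\<^sub>R alpha_plus r s | l. True}"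

definition tangent_minus :: "(real \<Rightarrow> real^3) \<Rightarrow> real \<Rightarrow> (real^3) set" where
  "tangent_minus r s = {r s + l *\<^sub>R alpha_minus r s | l. True}"

definition osc_plus :: "(real \<Rightarrow> real^3) \<Rightarrow> real \<Rightarrow> (real^3) set" where
  "osc_plus r s = {X. (X - r s) \<bullet> gamma_plus r s = 0}"

definition osc_minus :: "(real \<Rightarrow> real^3) \<Rightarrow> real \<Rightarrow> (real^3) set" where
  "osc_minus r s = {X. (X - r s) \<bullet> gamma_minus r s = 0}"

text \<open>Singular point: the point corresponds to more than one parameter counted with
  multiplicity, i.e. either the parameter itself has multiplicity at least 2 (r'(t) = 0),
  or another (possibly complex) parameter gives the same point.\<close>

definition singular_param :: "(3 \<Rightarrow> real poly) \<Rightarrow> (3 \<Rightarrow> real poly) \<Rightarrow> real \<Rightarrow> bool" where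
  "singular_param P Q t \<longleftrightarrow>
     d1 (rcurve P Q) t = 0 \<or>
     (\<exists>z. z \<noteq> complex_of_real t \<and> denoms_nonzeroC Q z \<and>
          rcurveC P Q z = rcurveC P Q (complex_of_real t))"

definition inflection_param :: "(real \<Rightarrow> real^3) \<Rightarrow> real \<Rightarrow> bool" where
  "inflection_param r t \<longleftrightarrow>
     norm (cross3 (d1 r t) (d2 r t)) / norm (d1 r t) ^ 3 = 0"

definition torsion_zero_param :: "(real \<Rightarrow> real^3) \<Rightarrow> real \<Rightarrow> bool" where
  "torsion_zero_param r t \<longleftrightarrow> det (vector [d1 r t, d2 r t, d3 r t] :: real^3^3) = 0"

definition character_param :: "(3 \<Rightarrow> real poly) \<Rightarrow> (3 \<Rightarrow> real poly) \<Rightarrow> real \<Rightarrow> bool" where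
  "character_param P Q t \<longleftrightarrow>
     singular_param P Q t \<or> inflection_param (rcurve P Q) t \<or>
     torsion_zero_param (rcurve P Q) t"

definition alpha_seg :: "(real \<Rightarrow> real^3) \<Rightarrow> real \<Rightarrow> real \<Rightarrow> real \<Rightarrow> real^3" where
  "alpha_seg r t0 t1 s =
     (if s = t0 then alpha_plus r t0 else if s = t1 then alpha_minus r t1 else utangent r s)"

definition admissible_segment ::
  "(3 \<Rightarrow> real poly) \<Rightarrow> (3 \<Rightarrow> real poly) \<Rightarrow> real set \<Rightarrow> real \<Rightarrow> real \<Rightarrow> bool" where
  "admissible_segment P Q I t0 t1 \<longleftrightarrow>
     (let r = rcurve P Q in
      t0 < t1 \<and> {t0..t1} \<subseteq> I \<and>
      (\<forall>t\<in>{t0<..t1}. \<not> character_param P Q t) \<and>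
      (\<forall>s1 s2. t0 \<le> s1 \<and> s1 < s2 \<and> s2 \<le> t1 \<longrightarrow>
         alpha_plus r s1 \<bullet> gamma_minus r s2 \<noteq> 0 \<and>
         alpha_minus r s2 \<bullet> gamma_plus r s1 \<noteq> 0 \<and>
         cross3 (alpha_plus r s1) (r s2 - r s1) \<bullet> alpha_minus r s2 \<noteq> 0 \<and>
         (r s1 - r s2) \<bullet> gamma_minus r s2 \<noteq> 0 \<and>
         (r s2 - r s1) \<bullet> gamma_plus r s1 \<noteq> 0) \<and>
      (\<forall>s1 s2 s3. t0 \<le> s1 \<and> s1 < s2 \<and> s2 < s3 \<and> s3 \<le> t1 \<longrightarrow>
         det (vector [alpha_seg r t0 t1 s1, alpha_seg r t0 t1 s2, alpha_seg r t0 t1 s3]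
               :: real^3^3) \<noteq> 0))"

text \<open>Associated tetrahedron of [a,b]: vertices r(a), T+(a) \<inter> L, T-(b) \<inter> L, r(b),
  where L = O+(a) \<inter> O-(b).\<close>

definition tet_L :: "(real \<Rightarrow> real^3) \<Rightarrow> real \<Rightarrow> real \<Rightarrow> (real^3) set" where
  "tet_L r a b = osc_plus r a \<inter> osc_minus r b"

definition tet_v1 :: "(real \<Rightarrow> real^3) \<Rightarrow> real \<Rightarrow> real \<Rightarrow> real^3" where
  "tet_v1 r a b = (THE X. X \<in> tangent_plus r a \<inter> tet_L r a b)"

definition tet_v2 :: "(real \<Rightarrow> real^3) \<Rightarrow> real \<Rightarrow> real \<Rightarrow> real^3" where
  "tet_v2 r a b = (THE X. X \<in> tangent_minus r b \<inter> tet_L r a b)"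

end

theory Submission
  imports Defs
begin

unbundle cross3_syntax


definition rfun :: "real poly \<times> real poly \<Rightarrow> real \<Rightarrow> real" where
  "rfun AB t = poly (fst AB) t / poly (snd AB) t"

definition rd :: "real poly \<times> real poly \<Rightarrow> real poly \<times> real poly" where
  "rd AB = (pderiv (fst AB) * snd AB - fst AB * pderiv (snd AB), snd AB * snd AB)"

lemma rd_snd: "poly (snd AB) t \<noteq> 0 \<Longrightarrow> poly (snd (rd AB)) t \<noteq> 0"
  by (simp add: rd_def)

lemma rdn_snd: "poly (snd AB) t \<noteq> 0 \<Longrightarrow> poly (snd ((rd ^^ k) AB)) t \<noteq> 0"
  by (induction k) (auto simp: rd_snd)

lemma rfun_deriv: "poly (snd AB) t \<noteq> 0 \<Longrightarrow> (rfun AB has_real_derivative rfun (rd AB) t) (at t)"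
  unfolding rfun_def rd_def
  apply (rule derivative_eq_intros poly_DERIV refl | assumption)+
  apply (simp add: field_simps power2_eq_square)
  done

lemma vec_sum_axis: "(\<chi> i. g i) = (\<Sum>i\<in>UNIV. g i *\<^sub>R axis i (1::real))"
  by (simp add: vec_eq_iff sum_component axis_def if_distrib eq_commute[of _ "_::3"] cong: if_cong)

lemma vec_deriv:
  assumes "\<And>i. (f i has_real_derivative f' i) (at t)"
  shows "((\<lambda>t. \<chi> i. f i t) has_vector_derivative (\<chi> i. f' i)) (at t)"
  unfolding vec_sum_axis
  apply (rule has_vector_derivative_sum)
  apply (rule has_vector_derivative_scaleR[where g = "\<lambda>_. axis _ 1" and g' = 0, simplified])
  using assms by (auto simp: has_real_derivative_iff_has_vector_derivative)




lemma decomp3: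
  fixes v b1 b2 b3 :: "real^3"
  shows "(v \<bullet> (b2 \<times> b3)) *\<^sub>R b1 + (v \<bullet> (b3 \<times> b1)) *\<^sub>R b2 + (v \<bullet> (b1 \<times> b2)) *\<^sub>R b3
         = (b1 \<bullet> (b2 \<times> b3)) *\<^sub>R v"
  by (simp add: cross3_simps forall_3) 

lemma cross_exp:
  fixes b1 b2 b3 :: "real^3"
  shows "(a1 *\<^sub>R b1 + a2 *\<^sub>R b2 + a3 *\<^sub>R b3) \<times> (c1 *\<^sub>R b1 + c2 *\<^sub>R b2 + c3 *\<^sub>R b3)
     = (a2*c3 - a3*c2) *\<^sub>R (b2 \<times> b3) + (a3*c1 - a1*c3) *\<^sub>R (b3 \<times> b1) + (a1*c2 - a2*c1) *\<^sub>R (b1 \<times> b2)"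
  by (simp add: cross3_simps)

lemma triple_exp:
  fixes b1 b2 b3 :: "real^3"
  shows "(a1 *\<^sub>R b1 + a2 *\<^sub>R b2 + a3 *\<^sub>R b3) \<bullet> ((c1 *\<^sub>R b1 + c2 *\<^sub>R b2 + c3 *\<^sub>R b3) \<times> (e1 *\<^sub>R b1 + e2 *\<^sub>R b2 + e3 *\<^sub>R b3))
     = (a1*(c2*e3 - c3*e2) - a2*(c1*e3 - c3*e1) + a3*(c1*e2 - c2*e1)) * (b1 \<bullet> (b2 \<times> b3))"
  by (simp add: cross3_simps)




lemma pow_split: "(h::real) \<noteq> 0 \<Longrightarrow> p \<le> q \<Longrightarrow> h^q = h^p * h^(q-p)"
  by (simp add: power_add[symmetric])

lemma hpow0: "n > 0 \<Longrightarrow> ((\<lambda>t. (t - t0)^n) \<longlongrightarrow> (0::real)) (at_right t0)"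
proof -
  assume "n>0"
  have "((\<lambda>t. t - t0) \<longlongrightarrow> t0 - t0) (at_right t0)"
    by (intro tendsto_diff tendsto_ident_at tendsto_const)
  then have "((\<lambda>t. (t - t0)^n) \<longlongrightarrow> (t0 - t0)^n) (at_right t0)"
    by (rule tendsto_power)
  moreover have "(t0 - t0)^n = (0::real)" using \<open>n>0\<close> by simp
  ultimately show ?thesis by metis
qed

lemma core:
  fixes r r1 r2 :: "real \<Rightarrow> real^3" and b1 b2 b3 :: "real^3"
    and x y z x1 y1 z1 x2 y2 z2 :: "real \<Rightarrow> real"
    and X0 Y0 Z0 t0 :: real and p q s :: nat
  assumes D: "b1 \<bullet> (b2 \<times> b3) \<noteq> 0"
    and pq: "1 \<le> p" "p < q" "q < s"
    and nz: "X0 \<noteq> 0" "Y0 \<noteq> 0" "Z0 \<noteq> 0"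
    and rep0: "\<And>t. r t - r t0 = x t *\<^sub>R b1 + y t *\<^sub>R b2 + z t *\<^sub>R b3"
    and rep1: "\<And>t. r1 t = x1 t *\<^sub>R b1 + y1 t *\<^sub>R b2 + z1 t *\<^sub>R b3"
    and rep2: "\<And>t. r2 t = x2 t *\<^sub>R b1 + y2 t *\<^sub>R b2 + z2 t *\<^sub>R b3"
    and lx: "((\<lambda>t. x t / (t-t0)^p) \<longlongrightarrow> X0) (at_right t0)"
            "((\<lambda>t. (t-t0) * x1 t / (t-t0)^p) \<longlongrightarrow> real p * X0) (at_right t0)"
            "((\<lambda>t. (t-t0)^2 * x2 t / (t-t0)^p) \<longlongrightarrow> real p * (real p - 1) * X0) (at_right t0)"
    and ly: "((\<lambda>t. y t / (t-t0)^q) \<longlongrightarrow> Y0) (at_right t0)"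
            "((\<lambda>t. (t-t0) * y1 t / (t-t0)^q) \<longlongrightarrow> real q * Y0) (at_right t0)"
            "((\<lambda>t. (t-t0)^2 * y2 t / (t-t0)^q) \<longlongrightarrow> real q * (real q - 1) * Y0) (at_right t0)"
    and lz: "((\<lambda>t. z t / (t-t0)^s) \<longlongrightarrow> Z0) (at_right t0)"
            "((\<lambda>t. (t-t0) * z1 t / (t-t0)^s) \<longlongrightarrow> real s * Z0) (at_right t0)"
            "((\<lambda>t. (t-t0)^2 * z2 t / (t-t0)^s) \<longlongrightarrow> real s * (real s - 1) * Z0) (at_right t0)"
  shows "((\<lambda>t. sgn (r1 t)) \<longlongrightarrow> sgn (X0 *\<^sub>R b1)) (at_right t0)"
    and "((\<lambda>t. sgn (r1 t \<times> r2 t)) \<longlongrightarrow>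
            sgn ((real p * real q * (real q - real p) * X0 * Y0) *\<^sub>R (b1 \<times> b2))) (at_right t0)"
    and "((\<lambda>t. ((r t - r t0) \<bullet> (r1 t \<times> r2 t)) / (sgn (X0 *\<^sub>R b1) \<bullet> (r1 t \<times> r2 t))) \<longlongrightarrow> 0) (at_right t0)"
    and "((\<lambda>t. ((r t - r t0) \<bullet> sgn ((real p * real q * (real q - real p) * X0 * Y0) *\<^sub>R (b1 \<times> b2)))
              / (sgn (r1 t) \<bullet> sgn ((real p * real q * (real q - real p) * X0 * Y0) *\<^sub>R (b1 \<times> b2)))) \<longlongrightarrow> 0) (at_right t0)"
    and "sgn (X0 *\<^sub>R b1) \<bullet> sgn ((real p * real q * (real q - real p) * X0 * Y0) *\<^sub>R (b1 \<times> b2)) = 0"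
proof -
  define F where "F = at_right t0"
  define \<Delta> where "\<Delta> = b1 \<bullet> (b2 \<times> b3)"
  define X where "X t = x t / (t-t0)^p" for t
  define X1 where "X1 t = (t-t0) * x1 t / (t-t0)^p" for t
  define X2 where "X2 t = (t-t0)^2 * x2 t / (t-t0)^p" for t
  define Y where "Y t = y t / (t-t0)^q" for t
  define Y1 where "Y1 t = (t-t0) * y1 t / (t-t0)^q" for t
  define Y2 where "Y2 t = (t-t0)^2 * y2 t / (t-t0)^q" for t
  define Z where "Z t = z t / (t-t0)^s" for t
  define Z1 where "Z1 t = (t-t0) * z1 t / (t-t0)^s" for t
  define Z2 where "Z2 t = (t-t0)^2 * z2 t / (t-t0)^s" for t
  have ev: "eventually (\<lambda>t. t > t0) F" unfolding F_def by (simp add: eventually_at_right_less)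
  have b1nz: "b1 \<noteq> 0" using D by auto
  have cyc: "b3 \<bullet> (b1 \<times> b2) = \<Delta>" "b2 \<bullet> (b3 \<times> b1) = \<Delta>"
    unfolding \<Delta>_def by (simp_all add: cross3_simps)
  have Nnz: "b1 \<times> b2 \<noteq> 0" using D cyc(1) unfolding \<Delta>_def by auto
  have pos: "real p > 0" "real q > real p" "real s > real q" using pq by auto
  define c1 where "c1 t = (t-t0) / (t-t0)^p" for t
  have e1: "eventually (\<lambda>t. c1 t *\<^sub>R r1 t = X1 t *\<^sub>R b1 + (Y1 t * (t-t0)^(q-p)) *\<^sub>R b2 + (Z1 t * (t-t0)^(s-p)) *\<^sub>R b3) F"
    using ev
  proof eventually_elim
    case (elim t)
    have h: "t - t0 \<noteq> 0" using elim by simp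
    have a: "c1 t * x1 t = X1 t" unfolding c1_def X1_def by simp
    have b: "c1 t * y1 t = Y1 t * (t-t0)^(q-p)" unfolding c1_def Y1_def
      using pow_split[OF h, of p q] pq h by (simp add: field_simps)
    have c: "c1 t * z1 t = Z1 t * (t-t0)^(s-p)" unfolding c1_def Z1_def
      using pow_split[OF h, of p s] pq h by (simp add: field_simps)
    show ?case unfolding rep1 by (simp add: scaleR_add_right a[symmetric] b[symmetric] c[symmetric])
  qed
  have l1: "((\<lambda>t. c1 t *\<^sub>R r1 t) \<longlongrightarrow> (real p * X0) *\<^sub>R b1) F"
  proof -
    have "((\<lambda>t. X1 t *\<^sub>R b1 + (Y1 t * (t-t0)^(q-p)) *\<^sub>R b2 + (Z1 t * (t-t0)^(s-p)) *\<^sub>R b3) \<longlongrightarrow>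
        (real p * X0) *\<^sub>R b1 + (real q * Y0 * 0) *\<^sub>R b2 + (real s * Z0 * 0) *\<^sub>R b3) F"
      unfolding F_def X1_def Y1_def Z1_def
      by (intro tendsto_intros lx ly lz hpow0) (use pq in auto)
    then show ?thesis using e1 by (simp add: tendsto_cong)
  qed
  have sgn_c1: "eventually (\<lambda>t. sgn (r1 t) = sgn (c1 t *\<^sub>R r1 t)) F"
    using ev by eventually_elim (simp add: sgn_scaleR c1_def)
  show A1: "((\<lambda>t. sgn (r1 t)) \<longlongrightarrow> sgn (X0 *\<^sub>R b1)) (at_right t0)"
  proof -
    have "((\<lambda>t. sgn (c1 t *\<^sub>R r1 t)) \<longlongrightarrow> sgn ((real p * X0) *\<^sub>R b1)) F"
      by (rule tendsto_sgn[OF l1]) (use nz b1nz pos in auto)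
    moreover have "sgn ((real p * X0) *\<^sub>R b1) = sgn (X0 *\<^sub>R b1)"
      using pos by (simp add: sgn_scaleR sgn_mult)
    ultimately show ?thesis using sgn_c1 unfolding F_def by (simp add: tendsto_cong)
  qed
  define c2 where "c2 t = (t-t0)^3 / (t-t0)^(p+q)" for t
  define K where "K = real p * real q * (real q - real p) * X0 * Y0"
  have subst: "eventually (\<lambda>t. x t = X t * (t-t0)^p \<and> y t = Y t * (t-t0)^q \<and> z t = Z t * (t-t0)^s \<and>
     x1 t = X1 t * (t-t0)^p / (t-t0) \<and> y1 t = Y1 t * (t-t0)^q / (t-t0) \<and> z1 t = Z1 t * (t-t0)^s / (t-t0) \<and>
     x2 t = X2 t * (t-t0)^p / (t-t0)^2 \<and> y2 t = Y2 t * (t-t0)^q / (t-t0)^2 \<and> z2 t = Z2 t * (t-t0)^s / (t-t0)^2) F"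
    using ev by eventually_elim (simp add: X_def Y_def Z_def X1_def Y1_def Z1_def X2_def Y2_def Z2_def)
  have e2: "eventually (\<lambda>t. c2 t *\<^sub>R (r1 t \<times> r2 t) =
      ((Y1 t*Z2 t - Z1 t*Y2 t) * (t-t0)^(s-p)) *\<^sub>R (b2 \<times> b3)
    + ((Z1 t*X2 t - X1 t*Z2 t) * (t-t0)^(s-q)) *\<^sub>R (b3 \<times> b1)
    + (X1 t*Y2 t - Y1 t*X2 t) *\<^sub>R (b1 \<times> b2)) F"
    using ev subst
  proof eventually_elim
    case (elim t)
    define h where "h = t - t0"
    have h: "h \<noteq> 0" using elim h_def by simp
    have ps: "h^s = h^p * h^(s-p)" "h^s = h^q * h^(s-q)"
      by (rule pow_split[OF h], use pq in simp)+
    have E: "y1 t = Y1 t * h^q / h" "z1 t = Z1 t * h^s / h" "x1 t = X1 t * h^p / h"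
       "y2 t = Y2 t * h^q / h^2" "z2 t = Z2 t * h^s / h^2" "x2 t = X2 t * h^p / h^2"
      using elim(2) unfolding h_def by auto
    have a: "c2 t * (y1 t * z2 t - z1 t * y2 t) = (Y1 t*Z2 t - Z1 t*Y2 t) * h^(s-p)"
      unfolding c2_def h_def[symmetric] E ps(1) using h by (simp add: power_add field_simps power2_eq_square power3_eq_cube)
    have b: "c2 t * (z1 t * x2 t - x1 t * z2 t) = (Z1 t*X2 t - X1 t*Z2 t) * h^(s-q)"
      unfolding c2_def h_def[symmetric] E ps(2) using h by (simp add: power_add field_simps power2_eq_square power3_eq_cube)
    have c: "c2 t * (x1 t * y2 t - y1 t * x2 t) = X1 t*Y2 t - Y1 t*X2 t"
      unfolding c2_def h_def[symmetric] E using h by (simp add: power_add field_simps power2_eq_square power3_eq_cube)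
    show ?case unfolding rep1 rep2 cross_exp h_def[symmetric]
      by (simp add: scaleR_add_right a[symmetric] b[symmetric] c[symmetric])
  qed
  have l2: "((\<lambda>t. c2 t *\<^sub>R (r1 t \<times> r2 t)) \<longlongrightarrow> K *\<^sub>R (b1 \<times> b2)) F"
  proof -
    have "((\<lambda>t. ((Y1 t*Z2 t - Z1 t*Y2 t) * (t-t0)^(s-p)) *\<^sub>R (b2 \<times> b3)
    + ((Z1 t*X2 t - X1 t*Z2 t) * (t-t0)^(s-q)) *\<^sub>R (b3 \<times> b1)
    + (X1 t*Y2 t - Y1 t*X2 t) *\<^sub>R (b1 \<times> b2)) \<longlongrightarrow>
       ((real q * Y0 * (real s * (real s - 1) * Z0) - real s * Z0 * (real q * (real q - 1) * Y0)) * 0) *\<^sub>R (b2 \<times> b3)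
     + ((real s * Z0 * (real p * (real p - 1) * X0) - real p * X0 * (real s * (real s - 1) * Z0)) * 0) *\<^sub>R (b3 \<times> b1)
     + (real p * X0 * (real q * (real q - 1) * Y0) - real q * Y0 * (real p * (real p - 1) * X0)) *\<^sub>R (b1 \<times> b2)) F"
      unfolding F_def X1_def Y1_def Z1_def X2_def Y2_def Z2_def
      by (intro tendsto_intros lx ly lz hpow0) (use pq in auto)
    moreover have "real p * X0 * (real q * (real q - 1) * Y0) - real q * Y0 * (real p * (real p - 1) * X0) = K"
      unfolding K_def by (simp add: algebra_simps)
    ultimately show ?thesis using e2 by (simp add: tendsto_cong)
  qed
  have Knz: "K \<noteq> 0" unfolding K_def using pos nz by auto
  have sgn_c2: "eventually (\<lambda>t. sgn (r1 t \<times> r2 t) = sgn (c2 t *\<^sub>R (r1 t \<times> r2 t))) F"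
    using ev by eventually_elim (simp add: sgn_scaleR c2_def)
  show A2: "((\<lambda>t. sgn (r1 t \<times> r2 t)) \<longlongrightarrow>
            sgn ((real p * real q * (real q - real p) * X0 * Y0) *\<^sub>R (b1 \<times> b2))) (at_right t0)"
  proof -
    have "((\<lambda>t. sgn (c2 t *\<^sub>R (r1 t \<times> r2 t))) \<longlongrightarrow> sgn (K *\<^sub>R (b1 \<times> b2))) F"
      by (rule tendsto_sgn[OF l2]) (use Knz Nnz in auto)
    then show ?thesis using sgn_c2 unfolding F_def K_def by (simp add: tendsto_cong)
  qed
  define \<kappa> where "\<kappa> = sgn X0 / norm b1"
  have kap: "sgn (X0 *\<^sub>R b1) = \<kappa> *\<^sub>R b1" unfolding \<kappa>_def
    by (simp add: sgn_scaleR sgn_div_norm divide_inverse)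
  have kapnz: "\<kappa> \<noteq> 0" unfolding \<kappa>_def using nz b1nz by (simp add: sgn_0_0)
  define Af where "Af t = X t*(Y1 t*Z2 t - Z1 t*Y2 t) - Y t*(X1 t*Z2 t - Z1 t*X2 t) + Z t*(X1 t*Y2 t - Y1 t*X2 t)" for t
  define Bg where "Bg t = Y1 t*Z2 t - Z1 t*Y2 t" for t
  have e3: "eventually (\<lambda>t. ((r t - r t0) \<bullet> (r1 t \<times> r2 t)) / (sgn (X0 *\<^sub>R b1) \<bullet> (r1 t \<times> r2 t))
      = (t-t0)^p * (Af t / (\<kappa> * Bg t))) F"
    using ev subst
  proof eventually_elim
    case (elim t)
    define h where "h = t - t0"
    have h: "h \<noteq> 0" using elim h_def by simp
    have E: "x t = X t * h^p" "y t = Y t * h^q" "z t = Z t * h^s"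
       "y1 t = Y1 t * h^q / h" "z1 t = Z1 t * h^s / h" "x1 t = X1 t * h^p / h"
       "y2 t = Y2 t * h^q / h^2" "z2 t = Z2 t * h^s / h^2" "x2 t = X2 t * h^p / h^2"
      using elim(2) unfolding h_def by auto
    have f: "(r t - r t0) \<bullet> (r1 t \<times> r2 t) = (x t*(y1 t*z2 t - z1 t*y2 t) - y t*(x1 t*z2 t - z1 t*x2 t) + z t*(x1 t*y2 t - y1 t*x2 t)) * \<Delta>"
      unfolding rep0 rep1 rep2 triple_exp \<Delta>_def by (simp add: algebra_simps)
    have g: "sgn (X0 *\<^sub>R b1) \<bullet> (r1 t \<times> r2 t) = \<kappa> * ((y1 t*z2 t - z1 t*y2 t) * \<Delta>)"
      unfolding kap rep1 rep2 cross_exp \<Delta>_def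
      by (simp add: inner_add_right dot_cross_self)
    have f2: "x t*(y1 t*z2 t - z1 t*y2 t) - y t*(x1 t*z2 t - z1 t*x2 t) + z t*(x1 t*y2 t - y1 t*x2 t)
        = Af t * (h^p * h^q * h^s) / h^3"
      unfolding E Af_def using h by (simp add: field_simps power2_eq_square power3_eq_cube)
    have g2: "y1 t*z2 t - z1 t*y2 t = Bg t * (h^q * h^s) / h^3"
      unfolding E Bg_def using h by (simp add: field_simps power2_eq_square power3_eq_cube)
    have fin: "(Af t * (h^p * h^q * h^s) / h^3 * \<Delta>) / (\<kappa> * (Bg t * (h^q * h^s) / h^3 * \<Delta>))
         = h^p * (Af t / (\<kappa> * Bg t))"
    proof (cases "Bg t = 0")
      case True then show ?thesis by simp
    next
      case False then show ?thesis using h kapnz D unfolding \<Delta>_def by (simp add: field_simps)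
    qed
    show ?case unfolding h_def[symmetric] f g unfolding f2 unfolding g2 by (rule fin)
  qed
  show A3: "((\<lambda>t. ((r t - r t0) \<bullet> (r1 t \<times> r2 t)) / (sgn (X0 *\<^sub>R b1) \<bullet> (r1 t \<times> r2 t))) \<longlongrightarrow> 0) (at_right t0)"
  proof -
    have "((\<lambda>t. (t-t0)^p * (Af t / (\<kappa> * Bg t))) \<longlongrightarrow> 0 * (
       (X0*(real q * Y0*(real s * (real s - 1) * Z0) - real s * Z0*(real q * (real q - 1) * Y0))
        - Y0*(real p * X0*(real s * (real s - 1) * Z0) - real s * Z0*(real p * (real p - 1) * X0))
        + Z0*(real p * X0*(real q * (real q - 1) * Y0) - real q * Y0*(real p * (real p - 1) * X0)))
       / (\<kappa> * (real q * Y0*(real s * (real s - 1) * Z0) - real s * Z0*(real q * (real q - 1) * Y0))))) F"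
      unfolding F_def Af_def Bg_def X_def Y_def Z_def X1_def Y1_def Z1_def X2_def Y2_def Z2_def
      apply (intro tendsto_intros lx ly lz hpow0)
      using pq nz kapnz pos by (auto simp: algebra_simps)
    then show ?thesis using e3 unfolding F_def by (simp add: tendsto_cong)
  qed
  define cc where "cc = sgn K / norm (b1 \<times> b2)"
  have gam: "sgn ((real p * real q * (real q - real p) * X0 * Y0) *\<^sub>R (b1 \<times> b2)) = cc *\<^sub>R (b1 \<times> b2)"
    unfolding cc_def K_def[symmetric] by (simp add: sgn_scaleR sgn_div_norm divide_inverse)
  have ccnz: "cc \<noteq> 0" unfolding cc_def using Knz Nnz by (simp add: sgn_0_0)
  show A5: "sgn (X0 *\<^sub>R b1) \<bullet> sgn ((real p * real q * (real q - real p) * X0 * Y0) *\<^sub>R (b1 \<times> b2)) = 0"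
    unfolding gam kap by (simp add: dot_cross_self)
  have zN: "\<And>t. (r t - r t0) \<bullet> (b1 \<times> b2) = z t * \<Delta>"
    unfolding rep0 using cyc by (simp add: inner_add_left dot_cross_self)
  have z1N: "\<And>t. r1 t \<bullet> (b1 \<times> b2) = z1 t * \<Delta>"
    unfolding rep1 using cyc by (simp add: inner_add_left dot_cross_self)
  have Dnz: "\<Delta> \<noteq> 0" using D unfolding \<Delta>_def .
  have e4: "eventually (\<lambda>t. ((r t - r t0) \<bullet> (cc *\<^sub>R (b1 \<times> b2))) / (sgn (r1 t) \<bullet> (cc *\<^sub>R (b1 \<times> b2)))
      = (Z t / Z1 t) * ((t-t0)^p * norm (c1 t *\<^sub>R r1 t))) F"
    using ev
  proof eventually_elim
    case (elim t)
    define h where "h = t - t0"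
    have h: "h > 0" using elim h_def by simp
    have lhs: "((r t - r t0) \<bullet> (cc *\<^sub>R (b1 \<times> b2))) / (sgn (r1 t) \<bullet> (cc *\<^sub>R (b1 \<times> b2)))
        = z t * norm (r1 t) / z1 t"
    proof (cases "r1 t = 0 \<or> z1 t = 0")
      case True then show ?thesis by (auto simp: sgn_div_norm z1N)
    next
      case False then show ?thesis using ccnz Dnz
        by (simp add: sgn_div_norm zN z1N field_simps)
    qed
    have rhs: "(Z t / Z1 t) * ((t-t0)^p * norm (c1 t *\<^sub>R r1 t)) = z t * norm (r1 t) / z1 t"
      unfolding Z_def Z1_def c1_def h_def[symmetric] using h
      by (cases "z1 t = 0") (simp_all add: field_simps)
    show ?case using lhs rhs by simp
  qed
  show A4: "((\<lambda>t. ((r t - r t0) \<bullet> sgn ((real p * real q * (real q - real p) * X0 * Y0) *\<^sub>R (b1 \<times> b2)))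
              / (sgn (r1 t) \<bullet> sgn ((real p * real q * (real q - real p) * X0 * Y0) *\<^sub>R (b1 \<times> b2)))) \<longlongrightarrow> 0) (at_right t0)"
  proof -
    have "((\<lambda>t. (Z t / Z1 t) * ((t-t0)^p * norm (c1 t *\<^sub>R r1 t))) \<longlongrightarrow> (Z0 / (real s * Z0)) * (0 * norm ((real p * X0) *\<^sub>R b1))) F"
    proof (rule tendsto_mult[OF _ tendsto_mult])
      show "((\<lambda>t. Z t / Z1 t) \<longlongrightarrow> Z0 / (real s * Z0)) F"
        unfolding F_def Z_def Z1_def by (rule tendsto_divide[OF lz(1) lz(2)]) (use pos nz in auto)
      show "((\<lambda>t. (t-t0)^p) \<longlongrightarrow> 0) F" unfolding F_def by (rule hpow0) (use pq in auto)
      show "((\<lambda>t. norm (c1 t *\<^sub>R r1 t)) \<longlongrightarrow> norm ((real p * X0) *\<^sub>R b1)) F"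
        by (rule tendsto_norm[OF l1])
    qed
    then show ?thesis unfolding gam using e4 unfolding F_def by (simp add: tendsto_cong)
  qed
qed


lemma ev_right: "open S \<Longrightarrow> t0 \<in> S \<Longrightarrow> eventually (\<lambda>t. t \<in> S) (at_right t0)"
  using eventually_nhds_in_open[of S t0] unfolding eventually_at_filter
  by (auto elim: eventually_mono)

lemma cont_right: "isCont f t0 \<Longrightarrow> (f \<longlongrightarrow> f t0) (at_right t0)"
  unfolding isCont_def by (rule tendsto_within_subset) auto

lemma rfun_cont: "poly (snd AB) t \<noteq> 0 \<Longrightarrow> isCont (rfun AB) t"
  using rfun_deriv DERIV_isCont by blast

lemma coord:
  fixes x x1 x2 :: "real \<Rightarrow> real" and A B :: "real poly" and S :: "real set"
  assumes S: "open S" "t0 \<in> S" and B: "\<And>t. t \<in> S \<Longrightarrow> poly B t \<noteq> 0" and p: "1 \<le> p"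
    and xe: "\<And>t. t \<in> S \<Longrightarrow> x t = (t - t0)^p * rfun (A,B) t"
    and d1: "\<And>t. t \<in> S \<Longrightarrow> (x has_real_derivative x1 t) (at t)"
    and d2: "\<And>t. t \<in> S \<Longrightarrow> (x1 has_real_derivative x2 t) (at t)"
  shows "((\<lambda>t. x t / (t-t0)^p) \<longlongrightarrow> rfun (A,B) t0) (at_right t0)"
    and "((\<lambda>t. (t-t0) * x1 t / (t-t0)^p) \<longlongrightarrow> real p * rfun (A,B) t0) (at_right t0)"
    and "((\<lambda>t. (t-t0)^2 * x2 t / (t-t0)^p) \<longlongrightarrow> real p * (real p - 1) * rfun (A,B) t0) (at_right t0)"
proof -
  define X where "X = rfun (A,B)"
  define X1 where "X1 = rfun (rd (A,B))"
  define X2 where "X2 = rfun (rd (rd (A,B)))"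
  have Bs: "\<And>t. t \<in> S \<Longrightarrow> poly (snd (A,B)) t \<noteq> 0" using B by simp
  have dX: "\<And>t. t \<in> S \<Longrightarrow> (X has_real_derivative X1 t) (at t)"
    unfolding X_def X1_def by (rule rfun_deriv[OF Bs])
  have dX1: "\<And>t. t \<in> S \<Longrightarrow> (X1 has_real_derivative X2 t) (at t)"
    unfolding X2_def X1_def by (rule rfun_deriv[OF rd_snd[OF Bs]])
  have cX: "isCont X t0" "isCont X1 t0" "isCont X2 t0"
    unfolding X_def X1_def X2_def using Bs[OF S(2)]
    by (auto intro!: rfun_cont rd_snd)
  define G1 where "G1 t = real p * (t-t0)^(p-1) * X t + (t-t0)^p * X1 t" for t
  define G2 where "G2 t = real p * (real (p-1) * (t-t0)^(p-1-1) * X t + (t-t0)^(p-1) * X1 t)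
                          + (real p * (t-t0)^(p-1) * X1 t + (t-t0)^p * X2 t)" for t
  have x1e: "x1 t = G1 t" if t: "t \<in> S" for t
  proof -
    have "((\<lambda>t. (t - t0)^p * X t) has_real_derivative G1 t) (at t)"
      unfolding G1_def
      by (rule derivative_eq_intros dX[OF t] refl | simp)+
    then have "(x has_real_derivative G1 t) (at t)"
      by (rule has_field_derivative_transform_within_open[OF _ S(1) t]) (simp add: xe X_def)
    then show ?thesis using d1[OF t] DERIV_unique by blast
  qed
  have x2e: "x2 t = G2 t" if t: "t \<in> S" for t
  proof -
    have "(G1 has_real_derivative G2 t) (at t)"
      unfolding G1_def G2_def
      by (rule derivative_eq_intros dX[OF t] dX1[OF t] refl | simp add: algebra_simps)+
    then have "(x1 has_real_derivative G2 t) (at t)"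
      by (rule has_field_derivative_transform_within_open[OF _ S(1) t]) (simp add: x1e)
    then show ?thesis using d2[OF t] DERIV_unique by blast
  qed
  have ev: "eventually (\<lambda>t. t \<in> S \<and> t > t0) (at_right t0)"
    using ev_right[OF S] eventually_at_right_less[of t0] by eventually_elim auto
  show "((\<lambda>t. x t / (t-t0)^p) \<longlongrightarrow> rfun (A,B) t0) (at_right t0)"
  proof -
    have "eventually (\<lambda>t. X t = x t / (t-t0)^p) (at_right t0)"
      using ev by eventually_elim (simp add: xe X_def)
    then show ?thesis using cont_right[OF cX(1)] unfolding X_def by (simp add: tendsto_cong)
  qed
  show "((\<lambda>t. (t-t0) * x1 t / (t-t0)^p) \<longlongrightarrow> real p * rfun (A,B) t0) (at_right t0)"
  proof -
    have "eventually (\<lambda>t. real p * X t + (t - t0) * X1 t = (t-t0) * x1 t / (t-t0)^p) (at_right t0)"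
      using ev
    proof eventually_elim
      case (elim t)
      have h: "t - t0 \<noteq> 0" using elim by simp
      have "(t-t0) * (t-t0)^(p-1) = (t-t0)^p" using p by (simp add: power_eq_if[of _ p])
      then show ?case using h unfolding x1e[OF conjunct1[OF elim]] G1_def
        by (simp add: field_simps)
    qed
    moreover have "((\<lambda>t. real p * X t + (t - t0) * X1 t) \<longlongrightarrow> real p * X t0 + (t0 - t0) * X1 t0) (at_right t0)"
      by (intro tendsto_intros cont_right cX)
    ultimately show ?thesis unfolding X_def by (simp add: tendsto_cong)
  qed
  show "((\<lambda>t. (t-t0)^2 * x2 t / (t-t0)^p) \<longlongrightarrow> real p * (real p - 1) * rfun (A,B) t0) (at_right t0)"
  proof -
    have "eventually (\<lambda>t. real p * (real p - 1) * X t + 2 * real p * (t - t0) * X1 t + (t-t0)^2 * X2 t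
          = (t-t0)^2 * x2 t / (t-t0)^p) (at_right t0)"
      using ev
    proof eventually_elim
      case (elim t)
      define h where "h = t - t0"
      have h: "h \<noteq> 0" using elim h_def by simp
      have a: "h * h^(p-1) = h^p" using p by (simp add: power_eq_if[of _ p])
      have b: "real (p-1) * h^(p-1-1) * h^2 = (real p - 1) * h^p"
      proof (cases "p = 1")
        case True then show ?thesis by simp
      next
        case False then have "p \<ge> 2" using p by simp
        then obtain k where k: "p = k + 2" by (metis add.commute le_Suc_ex)
        show ?thesis unfolding k by (simp add: power_add algebra_simps power2_eq_square)
      qed
      have "h^2 * G2 t = real p * (real (p-1) * h^(p-1-1) * h^2 * X t + h * (h * h^(p-1)) * X1 t) + real p * h * (h * h^(p-1)) * X1 t + h^2 * h^p * X2 t"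
        unfolding G2_def h_def[symmetric] power2_eq_square by algebra
      also have "\<dots> = real p * (real p - 1) * h^p * X t + 2 * real p * h * h^p * X1 t + h^2 * h^p * X2 t"
        unfolding a b by (simp add: algebra_simps)
      finally have "h^2 * G2 t = real p * (real p - 1) * h^p * X t + 2 * real p * h * h^p * X1 t + h^2 * h^p * X2 t" .
      then show ?case using h unfolding x2e[OF conjunct1[OF elim]] h_def[symmetric]
        by (simp add: field_simps)
    qed
    moreover have "((\<lambda>t. real p * (real p - 1) * X t + 2 * real p * (t - t0) * X1 t + (t-t0)^2 * X2 t)
        \<longlongrightarrow> real p * (real p - 1) * X t0 + 2 * real p * (t0 - t0) * X1 t0 + (t0-t0)^2 * X2 t0) (at_right t0)"
      by (intro tendsto_intros cont_right cX)
    ultimately show ?thesis unfolding X_def by (simp add: tendsto_cong)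
  qed
qed




definition Fk :: "(3 \<Rightarrow> real poly) \<Rightarrow> (3 \<Rightarrow> real poly) \<Rightarrow> nat \<Rightarrow> real \<Rightarrow> real^3" where
  "Fk P Q k t = (\<chi> i. rfun ((rd^^k) (P i, Q i)) t)"

definition Sset :: "(3 \<Rightarrow> real poly) \<Rightarrow> real set" where
  "Sset Q = {t. \<forall>i. poly (Q i) t \<noteq> 0}"

lemma Sset_prod: "Sset Q = {t. (\<Prod>i\<in>UNIV. poly (Q i) t) \<noteq> 0}"
  unfolding Sset_def by auto

lemma open_Sset: "open (Sset Q)"
  unfolding Sset_prod by (intro open_Collect_neq continuous_intros)

lemma F0: "rcurve P Q = Fk P Q 0"
  by (simp add: fun_eq_iff rcurve_def Fk_def rfun_def)

lemma Fder: "t \<in> Sset Q \<Longrightarrow> (Fk P Q k has_vector_derivative Fk P Q (Suc k) t) (at t)"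
  unfolding Fk_def
  apply (rule vec_deriv)
  apply simp
  apply (rule rfun_deriv)
  apply (rule rdn_snd)
  apply (simp add: Sset_def)
  done

lemma Fcont: "t \<in> Sset Q \<Longrightarrow> isCont (Fk P Q k) t"
  using Fder has_vector_derivative_continuous by blast

lemma d1eq: "t \<in> Sset Q \<Longrightarrow> d1 (rcurve P Q) t = Fk P Q 1 t"
  unfolding d1_def F0 using Fder[of t Q P 0] vector_derivative_at by simp

lemma d2eq: "t \<in> Sset Q \<Longrightarrow> d2 (rcurve P Q) t = Fk P Q 2 t"
proof -
  assume t: "t \<in> Sset Q"
  have F12: "(Fk P Q 1 has_vector_derivative Fk P Q 2 t) (at t)"
    using Fder[OF t, of P 1] by (simp add: numeral_2_eq_2)
  have "(d1 (rcurve P Q) has_vector_derivative Fk P Q 2 t) (at t)"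
    by (rule has_vector_derivative_transform_within_open[OF F12 open_Sset t])
       (simp add: d1eq)
  then show ?thesis unfolding d2_def by (rule vector_derivative_at)
qed

lemma inner_deriv:
  fixes f :: "real \<Rightarrow> real^3"
  assumes "(f has_vector_derivative f') (at t)"
  shows "((\<lambda>t. (f t - c) \<bullet> b) has_real_derivative (f' \<bullet> b)) (at t)"
proof -
  have "((\<lambda>t. (f t - c)) has_vector_derivative f') (at t)"
    using assms by (auto intro!: derivative_eq_intros)
  then have "((\<lambda>t. (f t - c) \<bullet> b) has_vector_derivative f' \<bullet> b) (at t)"
    by (rule bounded_linear.has_vector_derivative[OF bounded_linear_inner_left])
  then show ?thesis by (simp add: has_real_derivative_iff_has_vector_derivative)
qed

lemma coord_poly:
  fixes L :: "real poly"
  assumes "\<forall>k<m. coeff L k = 0"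
  shows "poly L h = h^m * poly (poly_shift m L) h" and "poly (poly_shift m L) 0 = coeff L m"
proof -
  have "L = monom 1 m * poly_shift m L"
    using assms by (intro poly_eqI) (auto simp: coeff_monom_mult coeff_poly_shift)
  then show "poly L h = h^m * poly (poly_shift m L) h"
    by (metis poly_monom poly_mult mult_1)
  show "poly (poly_shift m L) 0 = coeff L m"
    by (simp add: poly_0_coeff_0 coeff_poly_shift)
qed




definition Dp :: "(3 \<Rightarrow> real poly) \<Rightarrow> real poly" where
  "Dp Q = (\<Prod>i\<in>UNIV. Q i)"
definition Cp :: "(3 \<Rightarrow> real poly) \<Rightarrow> (3 \<Rightarrow> real poly) \<Rightarrow> real \<Rightarrow> 3 \<Rightarrow> real poly" where
  "Cp P Q t0 i = P i * (\<Prod>j\<in>UNIV-{i}. Q j) - smult ((rcurve P Q t0)$i) (Dp Q)"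
definition Csp where "Csp P Q t0 i = pcompose (Cp P Q t0 i) [:t0,1:]"
definition cv :: "(3 \<Rightarrow> real poly) \<Rightarrow> (3 \<Rightarrow> real poly) \<Rightarrow> real \<Rightarrow> nat \<Rightarrow> real^3" where
  "cv P Q t0 k = (\<chi> i. coeff (Csp P Q t0 i) k)"
definition Ln :: "(3 \<Rightarrow> real poly) \<Rightarrow> (3 \<Rightarrow> real poly) \<Rightarrow> real \<Rightarrow> real^3 \<Rightarrow> real poly" where
  "Ln P Q t0 n = (\<Sum>i\<in>UNIV. smult (n$i) (Csp P Q t0 i))"

lemma Dp_nz: "t \<in> Sset Q \<Longrightarrow> poly (Dp Q) t \<noteq> 0"
  by (simp add: Dp_def poly_prod Sset_def)

lemma repC: "t \<in> Sset Q \<Longrightarrow> (\<chi> i. poly (Cp P Q t0 i) t) = poly (Dp Q) t *\<^sub>R (rcurve P Q t - rcurve P Q t0)"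
proof -
  assume t: "t \<in> Sset Q"
  have "poly (Cp P Q t0 i) t = poly (Dp Q) t * ((rcurve P Q t - rcurve P Q t0) $ i)" for i
  proof -
    have Qi: "poly (Q i) t \<noteq> 0" using t by (simp add: Sset_def)
    have "poly (Dp Q) t = poly (Q i) t * (\<Prod>j\<in>UNIV-{i}. poly (Q j) t)"
      by (simp add: Dp_def poly_prod prod.remove[of UNIV i])
    then show ?thesis using Qi
      by (simp add: Cp_def poly_prod rcurve_def field_simps)
  qed
  then show ?thesis by (simp add: vec_eq_iff)
qed

lemma coeff_Ln: "coeff (Ln P Q t0 n) k = n \<bullet> cv P Q t0 k"
  by (simp add: Ln_def cv_def coeff_sum inner_vec_def)

lemma poly_Ln: "t \<in> Sset Q \<Longrightarrow> poly (Ln P Q t0 n) (t - t0) = poly (Dp Q) t * ((rcurve P Q t - rcurve P Q t0) \<bullet> n)"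
proof -
  assume t: "t \<in> Sset Q"
  have "poly (Ln P Q t0 n) (t - t0) = n \<bullet> (\<chi> i. poly (Cp P Q t0 i) t)"
    by (simp add: Ln_def Csp_def poly_sum poly_pcompose inner_vec_def)
  also have "\<dots> = poly (Dp Q) t * ((rcurve P Q t - rcurve P Q t0) \<bullet> n)"
    unfolding repC[OF t] by (simp add: inner_commute)
  finally show ?thesis .
qed

lemma cv0: "t0 \<in> Sset Q \<Longrightarrow> cv P Q t0 0 = 0"
proof -
  assume t: "t0 \<in> Sset Q"
  have "coeff (Csp P Q t0 i) 0 = poly (Cp P Q t0 i) t0" for i
    by (simp add: Csp_def poly_0_coeff_0[symmetric] poly_pcompose)
  moreover have "poly (Cp P Q t0 i) t0 = 0" for i
    using repC[OF t, of P t0] by (simp add: vec_eq_iff)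
  ultimately show ?thesis by (simp add: cv_def vec_eq_iff)
qed

lemma NP:
  assumes adm: "admissible_curve P Q I" and n: "n \<noteq> 0"
  shows "\<exists>k. n \<bullet> cv P Q t0 k \<noteq> 0"
proof (rule ccontr)
  assume "\<not> ?thesis"
  then have "Ln P Q t0 n = 0" by (intro poly_eqI) (simp add: coeff_Ln)
  then have "\<forall>t\<in>I. n \<bullet> rcurve P Q t = n \<bullet> rcurve P Q t0"
  proof (intro ballI)
    fix t assume "Ln P Q t0 n = 0" "t \<in> I"
    then have t: "t \<in> Sset Q" using adm by (auto simp: admissible_curve_def Sset_def)
    have "poly (Dp Q) t * ((rcurve P Q t - rcurve P Q t0) \<bullet> n) = 0"
      using poly_Ln[OF t, of P t0 n] \<open>Ln P Q t0 n = 0\<close> by simp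
    then show "n \<bullet> rcurve P Q t = n \<bullet> rcurve P Q t0" using Dp_nz[OF t]
      by (metis (no_types, lifting) inner_commute inner_diff_left mult_eq_0_iff right_minus_eq)
  qed
  then show False using adm n unfolding admissible_curve_def by blast
qed

lemma coord_full:
  assumes t0: "t0 \<in> Sset Q" and m: "1 \<le> m"
    and low: "\<forall>k<m. \<beta> \<bullet> cv P Q t0 k = 0" and lead: "\<beta> \<bullet> cv P Q t0 m \<noteq> 0" and c: "c \<noteq> 0"
  shows "\<exists>X0. X0 \<noteq> 0 \<and>
    ((\<lambda>t. ((rcurve P Q t - rcurve P Q t0) \<bullet> (c *\<^sub>R \<beta>)) / (t-t0)^m) \<longlongrightarrow> X0) (at_right t0) \<and>
    ((\<lambda>t. (t-t0) * (Fk P Q 1 t \<bullet> (c *\<^sub>R \<beta>)) / (t-t0)^m) \<longlongrightarrow> real m * X0) (at_right t0) \<and>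
    ((\<lambda>t. (t-t0)^2 * (Fk P Q 2 t \<bullet> (c *\<^sub>R \<beta>)) / (t-t0)^m) \<longlongrightarrow> real m * (real m - 1) * X0) (at_right t0)"
proof -
  define L where "L = Ln P Q t0 \<beta>"
  define U where "U = poly_shift m L"
  define A where "A = smult c (pcompose U [:-t0,1:])"
  have lowL: "\<forall>k<m. coeff L k = 0" using low by (simp add: L_def coeff_Ln inner_commute)
  have U0: "poly U 0 \<noteq> 0" using coord_poly(2)[OF lowL] lead by (simp add: U_def L_def coeff_Ln inner_commute)
  have xe: "(rcurve P Q t - rcurve P Q t0) \<bullet> (c *\<^sub>R \<beta>) = (t - t0)^m * rfun (A, Dp Q) t" if t: "t \<in> Sset Q" for t
  proof -
    have "poly (Dp Q) t * ((rcurve P Q t - rcurve P Q t0) \<bullet> \<beta>) = (t-t0)^m * poly U (t - t0)"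
      using poly_Ln[OF t, of P t0 \<beta>] coord_poly(1)[OF lowL, of "t - t0"] by (simp add: L_def U_def)
    then show ?thesis using Dp_nz[OF t]
      by (simp add: rfun_def A_def poly_pcompose field_simps)
  qed
  have d1: "((\<lambda>t. (rcurve P Q t - rcurve P Q t0) \<bullet> (c *\<^sub>R \<beta>)) has_real_derivative Fk P Q 1 t \<bullet> (c *\<^sub>R \<beta>)) (at t)"
    if t: "t \<in> Sset Q" for t
    using inner_deriv[OF Fder[OF t, of P 0], of "Fk P Q 0 t0" "c *\<^sub>R \<beta>"] unfolding F0 by (simp only: One_nat_def)
  have d2: "((\<lambda>t. Fk P Q 1 t \<bullet> (c *\<^sub>R \<beta>)) has_real_derivative Fk P Q 2 t \<bullet> (c *\<^sub>R \<beta>)) (at t)"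
    if t: "t \<in> Sset Q" for t
    using inner_deriv[OF Fder[OF t, of P 1], of 0 "c *\<^sub>R \<beta>"] by (simp only: numeral_2_eq_2 diff_zero One_nat_def)
  note co = coord[OF open_Sset t0 Dp_nz m xe d1 d2]
  have "rfun (A, Dp Q) t0 \<noteq> 0" using U0 c Dp_nz[OF t0] by (simp add: rfun_def A_def poly_pcompose)
  then show ?thesis using co by blast
qed




lemma ex_cross: "(b::real^3) \<noteq> 0 \<Longrightarrow> \<exists>m. b \<times> m \<noteq> 0"
proof (rule ccontr)
  assume b: "b \<noteq> 0" and "\<not> (\<exists>m. b \<times> m \<noteq> 0)"
  then have "b \<times> axis 1 1 = 0" "b \<times> axis 2 1 = 0" by auto
  then have "b = 0" by (simp add: cross3_simps axis_def forall_3)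
  then show False using b by simp
qed

lemma trip1: "((a::real^3) \<times> m) \<bullet> c = m \<bullet> (c \<times> a)" by (simp add: cross3_simps)
lemma trip2: "(a::real^3) \<bullet> (b \<times> c) = (a \<times> b) \<bullet> c" by (simp add: cross3_simps)
lemma cyc3: "((b2::real^3) \<times> b3) \<bullet> b1 = b1 \<bullet> (b2 \<times> b3)" "(b3 \<times> b1) \<bullet> b2 = b1 \<bullet> (b2 \<times> b3)"
   "(b1 \<times> b2) \<bullet> b3 = b1 \<bullet> (b2 \<times> b3)" by (simp_all add: cross3_simps)

lemma asym:
  assumes adm: "admissible_curve P Q I" and t0I: "t0 \<in> I"
  shows "\<exists>\<alpha>0 \<gamma>0. ((\<lambda>t. sgn (Fk P Q 1 t)) \<longlongrightarrow> \<alpha>0) (at_right t0) \<and>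
     ((\<lambda>t. sgn (Fk P Q 1 t \<times> Fk P Q 2 t)) \<longlongrightarrow> \<gamma>0) (at_right t0) \<and>
     ((\<lambda>t. ((rcurve P Q t - rcurve P Q t0) \<bullet> (Fk P Q 1 t \<times> Fk P Q 2 t)) / (\<alpha>0 \<bullet> (Fk P Q 1 t \<times> Fk P Q 2 t))) \<longlongrightarrow> 0) (at_right t0) \<and>
     ((\<lambda>t. ((rcurve P Q t - rcurve P Q t0) \<bullet> \<gamma>0) / (sgn (Fk P Q 1 t) \<bullet> \<gamma>0)) \<longlongrightarrow> 0) (at_right t0) \<and>
     \<alpha>0 \<bullet> \<gamma>0 = 0"
proof -
  have t0: "t0 \<in> Sset Q" using adm t0I by (auto simp: admissible_curve_def Sset_def)
  define c where "c = cv P Q t0"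
  have NP': "\<And>n. n \<noteq> 0 \<Longrightarrow> \<exists>k. n \<bullet> c k \<noteq> 0" unfolding c_def using NP[OF adm] by blast
  have c0: "c 0 = 0" unfolding c_def using cv0[OF t0] .
  have exp: "\<exists>k. c k \<noteq> 0" using NP'[of "axis 1 1"] by (metis axis_eq_0_iff inner_zero_right zero_neq_one)
  define p where "p = (LEAST k. c k \<noteq> 0)"
  define b1 where "b1 = c p"
  have b1nz: "b1 \<noteq> 0" unfolding b1_def p_def by (rule LeastI_ex[OF exp])
  have lowp: "\<And>k. k < p \<Longrightarrow> c k = 0" unfolding p_def using not_less_Least by blast
  have p1: "1 \<le> p" using b1nz c0 unfolding b1_def by (cases p) auto
  have exq: "\<exists>k. b1 \<times> c k \<noteq> 0"
  proof -
    obtain m where m: "b1 \<times> m \<noteq> 0" using ex_cross[OF b1nz] by blast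
    obtain k where k: "(b1 \<times> m) \<bullet> c k \<noteq> 0" using NP'[OF m] by blast
    have "b1 \<times> c k \<noteq> 0"
    proof
      assume "b1 \<times> c k = 0"
      then have "c k \<times> b1 = 0" using cross_skew by (metis neg_equal_0_iff_equal)
      then show False using k by (simp add: trip1)
    qed
    then show ?thesis by blast
  qed
  define q where "q = (LEAST k. b1 \<times> c k \<noteq> 0)"
  define b2 where "b2 = c q"
  have b12: "b1 \<times> b2 \<noteq> 0" unfolding b2_def q_def by (rule LeastI_ex[OF exq])
  have lowq: "\<And>k. k < q \<Longrightarrow> b1 \<times> c k = 0" unfolding q_def using not_less_Least by blast
  have pq: "p < q"
  proof (rule ccontr)
    assume "\<not> p < q"
    then have "q < p \<or> q = p" by auto
    then show False using b12 lowp[of q] unfolding b2_def b1_def by auto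
  qed
  obtain k0 where "(b1 \<times> b2) \<bullet> c k0 \<noteq> 0" using NP'[OF b12] by blast
  then have exs: "\<exists>k. (b1 \<times> b2) \<bullet> c k \<noteq> 0" by blast
  define s where "s = (LEAST k. (b1 \<times> b2) \<bullet> c k \<noteq> 0)"
  define b3 where "b3 = c s"
  have b123: "(b1 \<times> b2) \<bullet> b3 \<noteq> 0" unfolding b3_def s_def by (rule LeastI_ex[OF exs])
  have lows: "\<And>k. k < s \<Longrightarrow> (b1 \<times> b2) \<bullet> c k = 0" unfolding s_def using not_less_Least by blast
  have qs: "q < s"
  proof (rule ccontr)
    assume "\<not> q < s"
    then have "s < q \<or> s = q" by auto
    moreover have "(b1 \<times> b2) \<bullet> c k = 0" if "k < q" for k
      using lowq[OF that] by (simp add: trip1 cross_skew[of _ b1])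
    ultimately show False using b123 unfolding b3_def b2_def by (auto simp: dot_cross_self)
  qed
  define \<Delta> where "\<Delta> = b1 \<bullet> (b2 \<times> b3)"
  have Dnz: "\<Delta> \<noteq> 0" using b123 unfolding \<Delta>_def cyc3(3) .
  have cycz: "b3 \<bullet> (b1 \<times> b2) = \<Delta>" unfolding \<Delta>_def by (simp add: cross3_simps)
  have cx: "\<exists>X0. X0 \<noteq> 0 \<and>
    ((\<lambda>t. ((rcurve P Q t - rcurve P Q t0) \<bullet> (inverse \<Delta> *\<^sub>R (b2 \<times> b3))) / (t-t0)^p) \<longlongrightarrow> X0) (at_right t0) \<and>
    ((\<lambda>t. (t-t0) * (Fk P Q 1 t \<bullet> (inverse \<Delta> *\<^sub>R (b2 \<times> b3))) / (t-t0)^p) \<longlongrightarrow> real p * X0) (at_right t0) \<and>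
    ((\<lambda>t. (t-t0)^2 * (Fk P Q 2 t \<bullet> (inverse \<Delta> *\<^sub>R (b2 \<times> b3))) / (t-t0)^p) \<longlongrightarrow> real p * (real p - 1) * X0) (at_right t0)"
    by (rule coord_full[OF t0 p1]) (use lowp Dnz in \<open>auto simp: c_def[symmetric] b1_def[symmetric] cyc3 \<Delta>_def[symmetric]\<close>)
  have cy: "\<exists>Y0. Y0 \<noteq> 0 \<and>
    ((\<lambda>t. ((rcurve P Q t - rcurve P Q t0) \<bullet> (inverse \<Delta> *\<^sub>R (b3 \<times> b1))) / (t-t0)^q) \<longlongrightarrow> Y0) (at_right t0) \<and>
    ((\<lambda>t. (t-t0) * (Fk P Q 1 t \<bullet> (inverse \<Delta> *\<^sub>R (b3 \<times> b1))) / (t-t0)^q) \<longlongrightarrow> real q * Y0) (at_right t0) \<and>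
    ((\<lambda>t. (t-t0)^2 * (Fk P Q 2 t \<bullet> (inverse \<Delta> *\<^sub>R (b3 \<times> b1))) / (t-t0)^q) \<longlongrightarrow> real q * (real q - 1) * Y0) (at_right t0)"
  proof (rule coord_full[OF t0])
    show "1 \<le> q" using p1 pq by simp
    show "\<forall>k<q. (b3 \<times> b1) \<bullet> cv P Q t0 k = 0"
      using lowq unfolding c_def by (simp add: trip2[symmetric])
    show "(b3 \<times> b1) \<bullet> cv P Q t0 q \<noteq> 0" using Dnz cyc3(2)[of b3 b1 b2] unfolding c_def[symmetric] b2_def[symmetric] \<Delta>_def by simp
    show "inverse \<Delta> \<noteq> 0" using Dnz by simp
  qed
  have cz: "\<exists>Z0. Z0 \<noteq> 0 \<and>
    ((\<lambda>t. ((rcurve P Q t - rcurve P Q t0) \<bullet> (inverse \<Delta> *\<^sub>R (b1 \<times> b2))) / (t-t0)^s) \<longlongrightarrow> Z0) (at_right t0) \<and>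
    ((\<lambda>t. (t-t0) * (Fk P Q 1 t \<bullet> (inverse \<Delta> *\<^sub>R (b1 \<times> b2))) / (t-t0)^s) \<longlongrightarrow> real s * Z0) (at_right t0) \<and>
    ((\<lambda>t. (t-t0)^2 * (Fk P Q 2 t \<bullet> (inverse \<Delta> *\<^sub>R (b1 \<times> b2))) / (t-t0)^s) \<longlongrightarrow> real s * (real s - 1) * Z0) (at_right t0)"
    by (rule coord_full[OF t0]) (use p1 pq qs lows Dnz cycz in \<open>auto simp: c_def[symmetric] b3_def[symmetric] cyc3 \<Delta>_def[symmetric]\<close>)
  obtain X0 where X0: "X0 \<noteq> 0" and lx:
    "((\<lambda>t. ((rcurve P Q t - rcurve P Q t0) \<bullet> (inverse \<Delta> *\<^sub>R (b2 \<times> b3))) / (t-t0)^p) \<longlongrightarrow> X0) (at_right t0)"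
    "((\<lambda>t. (t-t0) * (Fk P Q 1 t \<bullet> (inverse \<Delta> *\<^sub>R (b2 \<times> b3))) / (t-t0)^p) \<longlongrightarrow> real p * X0) (at_right t0)"
    "((\<lambda>t. (t-t0)^2 * (Fk P Q 2 t \<bullet> (inverse \<Delta> *\<^sub>R (b2 \<times> b3))) / (t-t0)^p) \<longlongrightarrow> real p * (real p - 1) * X0) (at_right t0)"
    using cx by blast
  obtain Y0 where Y0: "Y0 \<noteq> 0" and ly:
    "((\<lambda>t. ((rcurve P Q t - rcurve P Q t0) \<bullet> (inverse \<Delta> *\<^sub>R (b3 \<times> b1))) / (t-t0)^q) \<longlongrightarrow> Y0) (at_right t0)"
    "((\<lambda>t. (t-t0) * (Fk P Q 1 t \<bullet> (inverse \<Delta> *\<^sub>R (b3 \<times> b1))) / (t-t0)^q) \<longlongrightarrow> real q * Y0) (at_right t0)"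
    "((\<lambda>t. (t-t0)^2 * (Fk P Q 2 t \<bullet> (inverse \<Delta> *\<^sub>R (b3 \<times> b1))) / (t-t0)^q) \<longlongrightarrow> real q * (real q - 1) * Y0) (at_right t0)"
    using cy by blast
  obtain Z0 where Z0: "Z0 \<noteq> 0" and lz:
    "((\<lambda>t. ((rcurve P Q t - rcurve P Q t0) \<bullet> (inverse \<Delta> *\<^sub>R (b1 \<times> b2))) / (t-t0)^s) \<longlongrightarrow> Z0) (at_right t0)"
    "((\<lambda>t. (t-t0) * (Fk P Q 1 t \<bullet> (inverse \<Delta> *\<^sub>R (b1 \<times> b2))) / (t-t0)^s) \<longlongrightarrow> real s * Z0) (at_right t0)"
    "((\<lambda>t. (t-t0)^2 * (Fk P Q 2 t \<bullet> (inverse \<Delta> *\<^sub>R (b1 \<times> b2))) / (t-t0)^s) \<longlongrightarrow> real s * (real s - 1) * Z0) (at_right t0)"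
    using cz by blast
  have dec: "v = (v \<bullet> (inverse \<Delta> *\<^sub>R (b2 \<times> b3))) *\<^sub>R b1 + (v \<bullet> (inverse \<Delta> *\<^sub>R (b3 \<times> b1))) *\<^sub>R b2
       + (v \<bullet> (inverse \<Delta> *\<^sub>R (b1 \<times> b2))) *\<^sub>R b3" for v
  proof -
    have "\<Delta> *\<^sub>R v = \<Delta> *\<^sub>R ((v \<bullet> (inverse \<Delta> *\<^sub>R (b2 \<times> b3))) *\<^sub>R b1 + (v \<bullet> (inverse \<Delta> *\<^sub>R (b3 \<times> b1))) *\<^sub>R b2
       + (v \<bullet> (inverse \<Delta> *\<^sub>R (b1 \<times> b2))) *\<^sub>R b3)"
      using decomp3[of v b2 b3 b1] Dnz unfolding \<Delta>_def by (simp add: scaleR_add_right mult.assoc[symmetric])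
    then show ?thesis using Dnz by simp
  qed
  have rep0: "\<And>t. rcurve P Q t - rcurve P Q t0 = ((rcurve P Q t - rcurve P Q t0) \<bullet> (inverse \<Delta> *\<^sub>R (b2 \<times> b3))) *\<^sub>R b1
    + ((rcurve P Q t - rcurve P Q t0) \<bullet> (inverse \<Delta> *\<^sub>R (b3 \<times> b1))) *\<^sub>R b2
    + ((rcurve P Q t - rcurve P Q t0) \<bullet> (inverse \<Delta> *\<^sub>R (b1 \<times> b2))) *\<^sub>R b3" by (rule dec)
  have rep1: "\<And>t. Fk P Q 1 t = (Fk P Q 1 t \<bullet> (inverse \<Delta> *\<^sub>R (b2 \<times> b3))) *\<^sub>R b1
    + (Fk P Q 1 t \<bullet> (inverse \<Delta> *\<^sub>R (b3 \<times> b1))) *\<^sub>R b2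
    + (Fk P Q 1 t \<bullet> (inverse \<Delta> *\<^sub>R (b1 \<times> b2))) *\<^sub>R b3" by (rule dec)
  have rep2: "\<And>t. Fk P Q 2 t = (Fk P Q 2 t \<bullet> (inverse \<Delta> *\<^sub>R (b2 \<times> b3))) *\<^sub>R b1
    + (Fk P Q 2 t \<bullet> (inverse \<Delta> *\<^sub>R (b3 \<times> b1))) *\<^sub>R b2
    + (Fk P Q 2 t \<bullet> (inverse \<Delta> *\<^sub>R (b1 \<times> b2))) *\<^sub>R b3" by (rule dec)
  have D': "b1 \<bullet> (b2 \<times> b3) \<noteq> 0" using Dnz unfolding \<Delta>_def .
  note co = core[OF D' p1 pq qs X0 Y0 Z0 rep0 rep1 rep2 lx ly lz]
  show ?thesis
    apply (rule exI[of _ "sgn (X0 *\<^sub>R b1)"])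
    apply (rule exI[of _ "sgn ((real p * real q * (real q - real p) * X0 * Y0) *\<^sub>R (b1 \<times> b2))"])
    using co Dnz unfolding \<Delta>_def by blast
qed




lemma the1:
  fixes a b \<alpha> \<gamma> \<gamma>' :: "real^3"
  assumes "\<alpha> \<bullet> \<gamma> = 0" "\<alpha> \<bullet> \<gamma>' \<noteq> 0"
  shows "(THE X. X \<in> {a + l *\<^sub>R \<alpha> | l. True} \<inter> ({X. (X - a) \<bullet> \<gamma> = 0} \<inter> {X. (X - b) \<bullet> \<gamma>' = 0}))
     = a + (((b - a) \<bullet> \<gamma>') / (\<alpha> \<bullet> \<gamma>')) *\<^sub>R \<alpha>"
proof (rule the_equality)
  show "a + (((b - a) \<bullet> \<gamma>') / (\<alpha> \<bullet> \<gamma>')) *\<^sub>R \<alpha> \<in> {a + l *\<^sub>R \<alpha> | l. True} \<inter> ({X. (X - a) \<bullet> \<gamma> = 0} \<inter> {X. (X - b) \<bullet> \<gamma>' = 0})"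
    using assms by (auto simp: inner_diff_left inner_add_left)
  fix X assume "X \<in> {a + l *\<^sub>R \<alpha> | l. True} \<inter> ({X. (X - a) \<bullet> \<gamma> = 0} \<inter> {X. (X - b) \<bullet> \<gamma>' = 0})"
  then obtain l where X: "X = a + l *\<^sub>R \<alpha>" and e: "(X - b) \<bullet> \<gamma>' = 0" by auto
  have "(a - b) \<bullet> \<gamma>' + l * (\<alpha> \<bullet> \<gamma>') = 0" using e unfolding X by (simp add: inner_diff_left inner_add_left)
  then have "l = ((b - a) \<bullet> \<gamma>') / (\<alpha> \<bullet> \<gamma>')" using assms(2) by (simp add: field_simps inner_diff_left)
  then show "X = a + (((b - a) \<bullet> \<gamma>') / (\<alpha> \<bullet> \<gamma>')) *\<^sub>R \<alpha>" using X by simp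
qed

lemma the2:
  fixes a b \<alpha> \<gamma> \<gamma>' :: "real^3"
  assumes "\<alpha> \<bullet> \<gamma>' = 0" "\<alpha> \<bullet> \<gamma> \<noteq> 0"
  shows "(THE X. X \<in> {b + l *\<^sub>R \<alpha> | l. True} \<inter> ({X. (X - a) \<bullet> \<gamma> = 0} \<inter> {X. (X - b) \<bullet> \<gamma>' = 0}))
     = b + (((a - b) \<bullet> \<gamma>) / (\<alpha> \<bullet> \<gamma>)) *\<^sub>R \<alpha>"
proof (rule the_equality)
  show "b + (((a - b) \<bullet> \<gamma>) / (\<alpha> \<bullet> \<gamma>)) *\<^sub>R \<alpha> \<in> {b + l *\<^sub>R \<alpha> | l. True} \<inter> ({X. (X - a) \<bullet> \<gamma> = 0} \<inter> {X. (X - b) \<bullet> \<gamma>' = 0})"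
    using assms by (auto simp: inner_diff_left inner_add_left)
  fix X assume "X \<in> {b + l *\<^sub>R \<alpha> | l. True} \<inter> ({X. (X - a) \<bullet> \<gamma> = 0} \<inter> {X. (X - b) \<bullet> \<gamma>' = 0})"
  then obtain l where X: "X = b + l *\<^sub>R \<alpha>" and e: "(X - a) \<bullet> \<gamma> = 0" by auto
  have "(b - a) \<bullet> \<gamma> + l * (\<alpha> \<bullet> \<gamma>) = 0" using e unfolding X by (simp add: inner_diff_left inner_add_left)
  then have "l = ((a - b) \<bullet> \<gamma>) / (\<alpha> \<bullet> \<gamma>)" using assms(2) by (simp add: field_simps inner_diff_left)
  then show "X = b + (((a - b) \<bullet> \<gamma>) / (\<alpha> \<bullet> \<gamma>)) *\<^sub>R \<alpha>" using X by simp
qed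

lemma negdiv: "((a::real) - b) / c = - ((b - a) / c)"
  by (cases "c = 0") (auto simp: field_simps)

lemma tri3: "dist (a::'a::metric_space) d \<le> dist b a + dist b c + dist d c"
proof -
  have "dist a d \<le> dist a b + dist b d" by (rule dist_triangle)
  moreover have "dist b d \<le> dist b c + dist c d" by (rule dist_triangle)
  ultimately show ?thesis by (simp add: dist_commute)
qed

lemma utangent_sgn: "utangent r t = sgn (d1 r t)"
  by (simp add: utangent_def sgn_div_norm)
lemma ubinormal_sgn: "ubinormal r t = sgn (d1 r t \<times> d2 r t)"
  by (simp add: ubinormal_def sgn_div_norm)

theorem lemma6:
  fixes P Q :: "3 \<Rightarrow> real poly" and I :: "real set" and t0 t1 :: real
  assumes "admissible_curve P Q I"
    and "admissible_segment P Q I t0 t1"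
  shows "((\<lambda>t. dist (rcurve P Q t0) (tet_v1 (rcurve P Q) t0 t)) \<longlongrightarrow> 0) (at_right t0) \<and>
         ((\<lambda>t. dist (tet_v1 (rcurve P Q) t0 t) (tet_v2 (rcurve P Q) t0 t)) \<longlongrightarrow> 0) (at_right t0) \<and>
         ((\<lambda>t. dist (tet_v2 (rcurve P Q) t0 t) (rcurve P Q t)) \<longlongrightarrow> 0) (at_right t0)"
proof -
  define r where "r = rcurve P Q"
  note adm = assms(1)
  have t01: "t0 < t1" and sub: "{t0..t1} \<subseteq> I"
    and nochar: "\<And>t. t \<in> {t0<..t1} \<Longrightarrow> \<not> character_param P Q t"
    and condI: "\<And>s1 s2. t0 \<le> s1 \<Longrightarrow> s1 < s2 \<Longrightarrow> s2 \<le> t1 \<Longrightarrow>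
         alpha_plus r s1 \<bullet> gamma_minus r s2 \<noteq> 0 \<and> alpha_minus r s2 \<bullet> gamma_plus r s1 \<noteq> 0"
    using assms(2) unfolding admissible_segment_def Let_def r_def by blast+
  have IS: "I \<subseteq> Sset Q" using adm by (auto simp: admissible_curve_def Sset_def)
  have t0I: "t0 \<in> I" using sub t01 by auto
  have t0S: "t0 \<in> Sset Q" using t0I IS by auto
  obtain \<alpha>0 \<gamma>0 where
    A1: "((\<lambda>t. sgn (Fk P Q 1 t)) \<longlongrightarrow> \<alpha>0) (at_right t0)" and
    A2: "((\<lambda>t. sgn (Fk P Q 1 t \<times> Fk P Q 2 t)) \<longlongrightarrow> \<gamma>0) (at_right t0)" and
    A3: "((\<lambda>t. ((rcurve P Q t - rcurve P Q t0) \<bullet> (Fk P Q 1 t \<times> Fk P Q 2 t)) / (\<alpha>0 \<bullet> (Fk P Q 1 t \<times> Fk P Q 2 t))) \<longlongrightarrow> 0) (at_right t0)" and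
    A4: "((\<lambda>t. ((rcurve P Q t - rcurve P Q t0) \<bullet> \<gamma>0) / (sgn (Fk P Q 1 t) \<bullet> \<gamma>0)) \<longlongrightarrow> 0) (at_right t0)" and
    A5: "\<alpha>0 \<bullet> \<gamma>0 = 0"
    using asym[OF adm t0I] by blast
  have evS: "eventually (\<lambda>t. t \<in> Sset Q) (at_right t0)" by (rule ev_right[OF open_Sset t0S])
  have ap: "alpha_plus r t0 = \<alpha>0"
  proof -
    have "eventually (\<lambda>t. sgn (Fk P Q 1 t) = utangent r t) (at_right t0)"
      using evS by eventually_elim (simp add: utangent_sgn r_def d1eq)
    then have "(utangent r \<longlongrightarrow> \<alpha>0) (at_right t0)" using A1 by (simp add: tendsto_cong)
    then show ?thesis unfolding alpha_plus_def by (simp add: tendsto_Lim)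
  qed
  have gp: "gamma_plus r t0 = \<gamma>0"
  proof -
    have "eventually (\<lambda>t. sgn (Fk P Q 1 t \<times> Fk P Q 2 t) = ubinormal r t) (at_right t0)"
      using evS by eventually_elim (simp add: ubinormal_sgn r_def d1eq d2eq)
    then have "(ubinormal r \<longlongrightarrow> \<gamma>0) (at_right t0)" using A2 by (simp add: tendsto_cong)
    then show ?thesis unfolding gamma_plus_def by (simp add: tendsto_Lim)
  qed
  have at_t: "gamma_minus r t = sgn (Fk P Q 1 t \<times> Fk P Q 2 t) \<and> alpha_minus r t = sgn (Fk P Q 1 t)
      \<and> Fk P Q 1 t \<times> Fk P Q 2 t \<noteq> 0 \<and> Fk P Q 1 t \<noteq> 0" if t: "t \<in> {t0<..t1}" for t
  proof -
    have "t \<in> {t0..t1}" using t by auto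
    then have tS: "t \<in> Sset Q" using sub IS by auto
    have ninf: "\<not> inflection_param r t" using nochar[OF t] unfolding character_param_def r_def by blast
    have w: "Fk P Q 1 t \<times> Fk P Q 2 t \<noteq> 0"
      using ninf unfolding inflection_param_def r_def d1eq[OF tS] d2eq[OF tS] by auto
    have f1: "Fk P Q 1 t \<noteq> 0" using w by auto
    have evt: "eventually (\<lambda>s. s \<in> Sset Q) (at t)" by (rule eventually_at_in_open'[OF open_Sset tS])
    have c1: "isCont (Fk P Q 1) t" "isCont (Fk P Q 2) t" by (rule Fcont[OF tS])+
    have "isCont (\<lambda>s. Fk P Q 1 s \<times> Fk P Q 2 s) t" by (intro continuous_cross c1)
    then have lw: "((\<lambda>s. sgn (Fk P Q 1 s \<times> Fk P Q 2 s)) \<longlongrightarrow> sgn (Fk P Q 1 t \<times> Fk P Q 2 t)) (at t)"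
      unfolding isCont_def by (rule tendsto_sgn) (rule w)
    have la: "((\<lambda>s. sgn (Fk P Q 1 s)) \<longlongrightarrow> sgn (Fk P Q 1 t)) (at t)"
      using c1(1) unfolding isCont_def by (rule tendsto_sgn) (rule f1)
    have "eventually (\<lambda>s. sgn (Fk P Q 1 s \<times> Fk P Q 2 s) = ubinormal r s) (at t)"
      using evt by eventually_elim (simp add: ubinormal_sgn r_def d1eq d2eq)
    then have "(ubinormal r \<longlongrightarrow> sgn (Fk P Q 1 t \<times> Fk P Q 2 t)) (at t)" using lw by (simp add: tendsto_cong)
    then have g: "gamma_minus r t = sgn (Fk P Q 1 t \<times> Fk P Q 2 t)"
      unfolding gamma_minus_def by (intro tendsto_Lim) (auto intro: tendsto_within_subset)
    have "eventually (\<lambda>s. sgn (Fk P Q 1 s) = utangent r s) (at t)"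
      using evt by eventually_elim (simp add: utangent_sgn r_def d1eq)
    then have "(utangent r \<longlongrightarrow> sgn (Fk P Q 1 t)) (at t)" using la by (simp add: tendsto_cong)
    then have a: "alpha_minus r t = sgn (Fk P Q 1 t)"
      unfolding alpha_minus_def by (intro tendsto_Lim) (auto intro: tendsto_within_subset)
    show ?thesis using g a w f1 by blast
  qed
  have ev: "eventually (\<lambda>t. t \<in> {t0<..<t1}) (at_right t0)" by (rule eventually_at_right_real[OF t01])
  define lam where "lam t = ((r t - r t0) \<bullet> (Fk P Q 1 t \<times> Fk P Q 2 t)) / (\<alpha>0 \<bullet> (Fk P Q 1 t \<times> Fk P Q 2 t))" for t
  define mu where "mu t = ((r t - r t0) \<bullet> \<gamma>0) / (sgn (Fk P Q 1 t) \<bullet> \<gamma>0)" for t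
  have v1: "eventually (\<lambda>t. dist (r t0) (tet_v1 r t0 t) = \<bar>lam t\<bar> * norm \<alpha>0) (at_right t0)"
    using ev
  proof eventually_elim
    case (elim t)
    then have t: "t \<in> {t0<..t1}" by auto
    note at = at_t[OF t]
    have ne: "\<alpha>0 \<bullet> gamma_minus r t \<noteq> 0" using condI[of t0 t] t ap by auto
    have "tet_v1 r t0 t = r t0 + (((r t - r t0) \<bullet> gamma_minus r t) / (\<alpha>0 \<bullet> gamma_minus r t)) *\<^sub>R \<alpha>0"
      unfolding tet_v1_def tangent_plus_def tet_L_def osc_plus_def osc_minus_def ap gp
      by (rule the1[OF A5 ne])
    also have "((r t - r t0) \<bullet> gamma_minus r t) / (\<alpha>0 \<bullet> gamma_minus r t) = lam t"
      unfolding at[THEN conjunct1] lam_def using at by (simp add: sgn_div_norm)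
    finally show ?case by (simp add: dist_norm)
  qed
  have v2: "eventually (\<lambda>t. dist (tet_v2 r t0 t) (r t) = \<bar>mu t\<bar>) (at_right t0)"
    using ev
  proof eventually_elim
    case (elim t)
    then have t: "t \<in> {t0<..t1}" by auto
    note at = at_t[OF t]
    have ne: "alpha_minus r t \<bullet> \<gamma>0 \<noteq> 0" using condI[of t0 t] t gp by auto
    have orth: "alpha_minus r t \<bullet> gamma_minus r t = 0"
      using at by (simp add: sgn_div_norm dot_cross_self)
    have "tet_v2 r t0 t = r t + (((r t0 - r t) \<bullet> \<gamma>0) / (alpha_minus r t \<bullet> \<gamma>0)) *\<^sub>R alpha_minus r t"
      unfolding tet_v2_def tangent_minus_def tet_L_def osc_plus_def osc_minus_def gp
      by (rule the2[OF orth ne])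
    moreover have "((r t0 - r t) \<bullet> \<gamma>0) / (alpha_minus r t \<bullet> \<gamma>0) = - mu t"
      unfolding mu_def using at by (simp add: inner_diff_left) (rule negdiv)
    moreover have "norm (alpha_minus r t) = 1" using at by (simp add: norm_sgn)
    ultimately show ?case by (simp add: dist_norm)
  qed
  have L1: "((\<lambda>t. dist (r t0) (tet_v1 r t0 t)) \<longlongrightarrow> 0) (at_right t0)"
  proof -
    have "((\<lambda>t. \<bar>lam t\<bar> * norm \<alpha>0) \<longlongrightarrow> \<bar>0\<bar> * norm \<alpha>0) (at_right t0)"
      using A3 unfolding lam_def r_def by (intro tendsto_intros)
    then show ?thesis using v1 by (simp add: tendsto_cong)
  qed
  have L3: "((\<lambda>t. dist (tet_v2 r t0 t) (r t)) \<longlongrightarrow> 0) (at_right t0)"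
  proof -
    have "((\<lambda>t. \<bar>mu t\<bar>) \<longlongrightarrow> \<bar>0\<bar>) (at_right t0)"
      using A4 unfolding mu_def r_def by (intro tendsto_intros)
    then show ?thesis using v2 by (simp add: tendsto_cong)
  qed
  have L0: "((\<lambda>t. dist (r t0) (r t)) \<longlongrightarrow> 0) (at_right t0)"
  proof -
    have "isCont r t0" unfolding r_def F0 by (rule Fcont[OF t0S])
    then have "(r \<longlongrightarrow> r t0) (at_right t0)" by (rule cont_right)
    then have "((\<lambda>t. dist (r t0) (r t)) \<longlongrightarrow> dist (r t0) (r t0)) (at_right t0)"
      by (intro tendsto_intros)
    then show ?thesis by simp
  qed
  have L2: "((\<lambda>t. dist (tet_v1 r t0 t) (tet_v2 r t0 t)) \<longlongrightarrow> 0) (at_right t0)"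
  proof (rule tendsto_sandwich[where f="\<lambda>_. 0"])
    show "eventually (\<lambda>t. 0 \<le> dist (tet_v1 r t0 t) (tet_v2 r t0 t)) (at_right t0)" by simp
    show "eventually (\<lambda>t. dist (tet_v1 r t0 t) (tet_v2 r t0 t) \<le>
        dist (r t0) (tet_v1 r t0 t) + dist (r t0) (r t) + dist (tet_v2 r t0 t) (r t)) (at_right t0)"
      by (intro always_eventually allI tri3)
    show "((\<lambda>t. 0) \<longlongrightarrow> (0::real)) (at_right t0)" by simp
    have "((\<lambda>t. dist (r t0) (tet_v1 r t0 t) + dist (r t0) (r t) + dist (tet_v2 r t0 t) (r t)) \<longlongrightarrow> 0 + 0 + 0) (at_right t0)"
      by (intro tendsto_add L1 L0 L3)
    then show "((\<lambda>t. dist (r t0) (tet_v1 r t0 t) + dist (r t0) (r t) + dist (tet_v2 r t0 t) (r t)) \<longlongrightarrow> 0) (at_right t0)"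
      by simp
  qed
  show ?thesis using L1 L2 L3 unfolding r_def by blast
qed

end
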